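(* Let $G$ be a tree with negative definite intersection matrix, $\mathcal N$ its set of nodes (vertices of degree $\ge 3$), and $x$ the Laufer operator with respect to $\mathcal N$. Let $n\in\mathcal N$ and let $v_1,\dots,v_s$ ($s\ge1$) be a chain of non-node vertices with $v_1$ adjacent to $n$, $v_j$ adjacent to $v_{j+1}$, of one of two types: (a) a bamboo: each $v_j$ has degree $2$ and $v_s$ is adjacent to a node $n'\neq n$; or (b) a leg: $v_s$ has degree $1$ and $v_1,\dots,v_{s-1}$ have degree $2$. Assume $b_{v_j}\ge2$ for all $j$, except that in case (b) with $s=1$ also $b_{v_1}=1$ is allowed. Let $\alpha$ be the determinant of the negative of the intersection matrix of $\{v_1,\dots,v_s\}$ and $\beta$ that of $\{v_2,\dots,v_s\}$ (with $\beta=1$ if $s=1$), so $\alpha/\beta=[b_{v_1},\dots,b_{v_s}]$. If $Z\in L$ satisfies $x(Z)=Z$, then $$m_{v_1}(Z)=\left\lceil\frac{\beta\,m_n(Z)+m_{n'}(Z)}{\alpha}\right\rceil,$$ where in case (b) one sets $m_{n'}(Z)=0$.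
   Context: $L=\bigoplus_v\mathbb ZE_v$ with $(E_v,E_w)$ = number of edges for $v\ne w$ and $(E_v,E_v)=-b_v$; $m_v(Z)$ is the coefficient of $E_v$ in $Z$. The Laufer operator $x(Z)$ is the unique coefficientwise-minimal $Z''\in L$ with $m_n(Z'')=m_n(Z)$ for all nodes $n$ and $(Z'',E_v)\le0$ for all non-node vertices $v$. $[b_1,\dots,b_s]=b_1-1/(b_2-1/(\cdots-1/b_s))$ is the negative continued fraction. *)

theory Defs
  imports Complex_Main "Jordan_Normal_Form.Determinant"
begin

text \<open>A plumbing graph: finite vertex set V, symmetric irreflexive adjacency E
  (simple graph, so the number of edges between distinct v, w is 0 or 1),
  and Euler numbers b.\<close>

definition graph_ok :: "'a set \<Rightarrow> ('a \<Rightarrow> 'a \<Rightarrow> bool) \<Rightarrow> bool" where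
  "graph_ok V E \<longleftrightarrow> finite V \<and> (\<forall>v w. E v w \<longrightarrow> v \<in> V \<and> w \<in> V)
     \<and> (\<forall>v w. E v w \<longleftrightarrow> E w v) \<and> (\<forall>v. \<not> E v v)"

definition edge_set :: "'a set \<Rightarrow> ('a \<Rightarrow> 'a \<Rightarrow> bool) \<Rightarrow> 'a set set" where
  "edge_set V E = {{v, w} | v w. v \<in> V \<and> w \<in> V \<and> E v w}"

definition is_tree :: "'a set \<Rightarrow> ('a \<Rightarrow> 'a \<Rightarrow> bool) \<Rightarrow> bool" where
  "is_tree V E \<longleftrightarrow> graph_ok V E \<and> V \<noteq> {}
     \<and> (\<forall>v\<in>V. \<forall>w\<in>V. (\<lambda>x y. E x y)\<^sup>*\<^sup>* v w)
     \<and> card (edge_set V E) + 1 = card V"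

definition degree :: "'a set \<Rightarrow> ('a \<Rightarrow> 'a \<Rightarrow> bool) \<Rightarrow> 'a \<Rightarrow> nat" where
  "degree V E v = card {w \<in> V. E v w}"

definition nodes :: "'a set \<Rightarrow> ('a \<Rightarrow> 'a \<Rightarrow> bool) \<Rightarrow> 'a set" where
  "nodes V E = {v \<in> V. degree V E v \<ge> 3}"

definition imat :: "('a \<Rightarrow> 'a \<Rightarrow> bool) \<Rightarrow> ('a \<Rightarrow> int) \<Rightarrow> 'a \<Rightarrow> 'a \<Rightarrow> int" where
  "imat E b v w = (if v = w then - b v else if E v w then 1 else 0)"

definition lattice :: "'a set \<Rightarrow> ('a \<Rightarrow> int) set" where
  "lattice V = {Z. \<forall>v. v \<notin> V \<longrightarrow> Z v = 0}"

definition iform :: "'a set \<Rightarrow> ('a \<Rightarrow> 'a \<Rightarrow> bool) \<Rightarrow> ('a \<Rightarrow> int) \<Rightarrow> ('a \<Rightarrow> int) \<Rightarrow> ('a \<Rightarrow> int) \<Rightarrow> int" where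
  "iform V E b Z Z' = (\<Sum>v\<in>V. \<Sum>w\<in>V. Z v * Z' w * imat E b v w)"

definition iform_E :: "'a set \<Rightarrow> ('a \<Rightarrow> 'a \<Rightarrow> bool) \<Rightarrow> ('a \<Rightarrow> int) \<Rightarrow> ('a \<Rightarrow> int) \<Rightarrow> 'a \<Rightarrow> int" where
  "iform_E V E b Z v = (\<Sum>w\<in>V. Z w * imat E b w v)"

definition neg_definite :: "'a set \<Rightarrow> ('a \<Rightarrow> 'a \<Rightarrow> bool) \<Rightarrow> ('a \<Rightarrow> int) \<Rightarrow> bool" where
  "neg_definite V E b \<longleftrightarrow> (\<forall>x :: 'a \<Rightarrow> real. (\<exists>v\<in>V. x v \<noteq> 0) \<longrightarrow>
      (\<Sum>v\<in>V. \<Sum>w\<in>V. x v * x w * real_of_int (imat E b v w)) < 0)"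

definition laufer_set :: "'a set \<Rightarrow> ('a \<Rightarrow> 'a \<Rightarrow> bool) \<Rightarrow> ('a \<Rightarrow> int) \<Rightarrow> ('a \<Rightarrow> int) \<Rightarrow> ('a \<Rightarrow> int) set" where
  "laufer_set V E b Z = {Z'' \<in> lattice V. (\<forall>n\<in>nodes V E. Z'' n = Z n)
      \<and> (\<forall>v\<in>V - nodes V E. iform_E V E b Z'' v \<le> 0)}"

definition laufer :: "'a set \<Rightarrow> ('a \<Rightarrow> 'a \<Rightarrow> bool) \<Rightarrow> ('a \<Rightarrow> int) \<Rightarrow> ('a \<Rightarrow> int) \<Rightarrow> ('a \<Rightarrow> int)" where
  "laufer V E b Z = (THE Z''. Z'' \<in> laufer_set V E b Z \<and>
      (\<forall>Y\<in>laufer_set V E b Z. \<forall>v. Z'' v \<le> Y v))"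

definition chain_det :: "('a \<Rightarrow> 'a \<Rightarrow> bool) \<Rightarrow> ('a \<Rightarrow> int) \<Rightarrow> 'a list \<Rightarrow> int" where
  "chain_det E b vs = det (mat (length vs) (length vs)
      (\<lambda>(i, j). - imat E b (vs ! i) (vs ! j)))"

end

theory Submission
  imports Defs
begin

lemma det_tridiag:
  fixes f :: "nat \<times> nat \<Rightarrow> int"
  assumes k: "k \<ge> 2" and z1: "\<And>i j. i+1 < j \<Longrightarrow> j < k \<Longrightarrow> f(i,j) = 0" and z2: "\<And>i j. j+1<i \<Longrightarrow> i < k \<Longrightarrow> f(i,j)=0"
  shows "det (mat k k f) = f(0,0) * det (mat (k-1) (k-1) (\<lambda>(i,j). f(i+1,j+1)))
     - f(0,1)*f(1,0)* det (mat (k-2) (k-2) (\<lambda>(i,j). f(i+2,j+2)))"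
proof -
  define A where "A = mat k k f"
  have A: "A \<in> carrier_mat k k" unfolding A_def by simp
  have "det A = (\<Sum>i<k. A $$ (i,0) * cofactor A i 0)"
    by (rule laplace_expansion_column[OF A]) (use k in auto)
  also have "\<dots> = (\<Sum>i<2. A $$ (i,0) * cofactor A i 0)"
  proof (rule sum.mono_neutral_right)
    show "\<forall>i\<in>{..<k} - {..<2}. A $$ (i,0) * cofactor A i 0 = 0"
      using z2 unfolding A_def by auto
  qed (use k in auto)
  also have "\<dots> = A $$ (0,0) * cofactor A 0 0 + A $$ (1,0) * cofactor A 1 0"
    by (simp add: numeral_2_eq_2)
  finally have d: "det A = A $$ (0,0) * cofactor A 0 0 + A $$ (1,0) * cofactor A 1 0" .
  have d0: "mat_delete A 0 0 = mat (k-1) (k-1) (\<lambda>(i,j). f(i+1,j+1))"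
    unfolding A_def mat_delete_def by (rule eq_matI) auto
  have d1: "det (mat_delete A 1 0) = f(0,1) * det (mat (k-2) (k-2) (\<lambda>(i,j). f(i+2,j+2)))"
  proof -
    define B where "B = mat_delete A 1 0"
    have B: "B \<in> carrier_mat (k-1) (k-1)" unfolding B_def A_def mat_delete_def by simp
    have "det B = (\<Sum>j<k-1. B $$ (0,j) * cofactor B 0 j)"
      by (rule laplace_expansion_row[OF B]) (use k in auto)
    also have "\<dots> = (\<Sum>j<1. B $$ (0,j) * cofactor B 0 j)"
    proof (rule sum.mono_neutral_right)
      show "\<forall>j\<in>{..<k-1} - {..<1}. B $$ (0,j) * cofactor B 0 j = 0"
        using z1 k unfolding B_def A_def mat_delete_def by auto
    qed (use k in auto)
    also have "\<dots> = B $$ (0,0) * det (mat_delete B 0 0)" by (simp add: cofactor_def)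
    also have "mat_delete B 0 0 = mat (k-2) (k-2) (\<lambda>(i,j). f(i+2,j+2))"
      unfolding B_def A_def mat_delete_def by (rule eq_matI) (use k in auto)
    also have "B $$ (0,0) = f(0,1)" unfolding B_def A_def mat_delete_def using k by auto
    finally show ?thesis unfolding B_def by simp
  qed
  show ?thesis using d d0 d1 k unfolding A_def by (simp add: cofactor_def)
qed

locale chainarith =
  fixes a B :: "nat \<Rightarrow> int" and s :: nat
  assumes s1: "s \<ge> 1"
    and rec: "\<And>j. 1 \<le> j \<Longrightarrow> j \<le> s \<Longrightarrow> a j = B j * a (j+1) - a (j+2)"
    and as1: "a (s+1) = 1" and as2: "a (s+2) = 0"
    and pos: "\<And>j. 1 \<le> j \<Longrightarrow> j \<le> s+1 \<Longrightarrow> a j > 0"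
begin

lemma lower:
  fixes z :: "nat \<Rightarrow> int" and c :: int
  assumes cons: "\<And>j. 1 \<le> j \<Longrightarrow> j \<le> s \<Longrightarrow> z (j-1) + z (j+1) \<le> B j * z j"
    and zc: "z (s+1) = c"
  shows "a 1 * z 1 \<ge> a 2 * z 0 + c"
proof -
  have "a j * z j \<ge> a (j+1) * z (j-1) + c" if "1 \<le> j" "j \<le> s+1" for j
    using that(2,1)
  proof (induction j rule: inc_induct)
    case base
    then show ?case using as1 as2 zc by simp
  next
    case (step j)
    have IH: "a (j+1) * z (j+1) \<ge> a (j+2) * z j + c" using step by simp
    have c1: "z (j-1) + z (j+1) \<le> B j * z j" using cons step by simp
    have ap: "a (j+1) > 0" using pos step by simp
    have "a (j+1) * (z (j-1) + z (j+1)) \<le> a (j+1) * (B j * z j)"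
      using c1 ap by (simp add: mult_left_mono)
    then have "a (j+1) * z (j-1) + c \<le> (B j * a (j+1) - a (j+2)) * z j"
      using IH by (simp add: algebra_simps)
    then show ?case using rec[of j] step by simp
  qed
  from this[of 1] show ?thesis using s1 by (simp add: numeral_2_eq_2)
qed

primrec zz :: "int \<Rightarrow> int \<Rightarrow> nat \<Rightarrow> int" where
  "zz z0 c 0 = z0"
| "zz z0 c (Suc j) = \<lceil>(real_of_int (a (j+2)) * real_of_int (zz z0 c j) + real_of_int c) / real_of_int (a (j+1))\<rceil>"

lemma upper:
  fixes z0 c :: int
  shows "\<exists>z. z 0 = z0 \<and> z (s+1) = c \<and> (\<forall>j. 1 \<le> j \<and> j \<le> s \<longrightarrow> z (j-1) + z (j+1) \<le> B j * z j)
     \<and> z 1 = \<lceil>(real_of_int (a 2) * real_of_int z0 + real_of_int c) / real_of_int (a 1)\<rceil>"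
proof (intro exI conjI allI impI)
  let ?z = "zz z0 c"
  show "?z 0 = z0" by simp
  show "?z 1 = \<lceil>(real_of_int (a 2) * real_of_int z0 + real_of_int c) / real_of_int (a 1)\<rceil>"
    by (simp add: numeral_2_eq_2)
  show "?z (s+1) = c" using as1 as2 by simp
  fix j assume j: "1 \<le> j \<and> j \<le> s"
  obtain i where i: "j = Suc i" using j by (cases j) auto
  have aj: "a j > 0" "a (j+1) > 0" using pos j by auto
  have zj: "?z j = \<lceil>(real_of_int (a (j+1)) * real_of_int (?z (j-1)) + real_of_int c) / real_of_int (a j)\<rceil>"
    using i by (simp add: add.commute)
  have "(real_of_int (a (j+1)) * real_of_int (?z (j-1)) + real_of_int c) / real_of_int (a j) \<le> real_of_int (?z j)"
    unfolding zj by (rule le_of_int_ceiling)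
  then have "real_of_int (a (j+1) * ?z (j-1) + c) \<le> real_of_int (a j * ?z j)"
    using aj by (simp add: pos_divide_le_eq mult.commute)
  then have h1: "a (j+1) * ?z (j-1) + c \<le> a j * ?z j" by linarith
  have h2: "a (j+2) * ?z j + c \<le> a (j+1) * (B j * ?z j - ?z (j-1))"
    using h1 rec[of j] j by (simp add: algebra_simps)
  have "(real_of_int (a (j+2)) * real_of_int (?z j) + real_of_int c) / real_of_int (a (j+1))
      \<le> real_of_int (B j * ?z j - ?z (j-1))"
  proof -
    have "real_of_int (a (j+2) * ?z j + c) \<le> real_of_int (a (j+1) * (B j * ?z j - ?z (j-1)))"
      using h2 by (simp only: of_int_le_iff)
    then show ?thesis using aj by (simp add: pos_divide_le_eq mult.commute)
  qed
  then have "?z (j+1) \<le> B j * ?z j - ?z (j-1)"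
    by (simp add: ceiling_le add.commute)
  then show "?z (j-1) + ?z (j+1) \<le> B j * ?z j" by simp
qed

end

locale plumb =
  fixes V :: "'a set" and E :: "'a \<Rightarrow> 'a \<Rightarrow> bool" and b :: "'a \<Rightarrow> int"
  assumes gok: "graph_ok V E" and nd: "neg_definite V E b"
begin

lemma finV: "finite V" using gok unfolding graph_ok_def by auto
lemma Esym: "E v w \<longleftrightarrow> E w v" using gok unfolding graph_ok_def by auto
lemma Eirr: "\<not> E v v" using gok unfolding graph_ok_def by auto
lemma EV: "E v w \<Longrightarrow> v \<in> V \<and> w \<in> V" using gok unfolding graph_ok_def by auto

lemma imat_sym: "imat E b v w = imat E b w v"
  unfolding imat_def using Esym by auto

lemma imat_nonneg: "v \<noteq> w \<Longrightarrow> imat E b v w \<ge> 0"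
  unfolding imat_def by auto

lemma sum_reindex_list:
  assumes "distinct ws"
  shows "(\<Sum>a\<in>set ws. h a) = (\<Sum>i<length ws. h (ws ! i))"
  using sum.reindex_bij_betw[OF bij_betw_nth[OF assms refl refl], of h] by simp

lemma solve:
  assumes SV: "S \<subseteq> V"
  shows "\<exists>P :: 'a \<Rightarrow> real. \<forall>v\<in>S. (\<Sum>w\<in>S. P w * real_of_int (imat E b w v)) = g v"
proof -
  have finS: "finite S" using SV finV finite_subset by auto
  obtain ws where ws: "set ws = S" "distinct ws" using finite_distinct_list[OF finS] by auto
  define k where "k = length ws"
  define A :: "real mat" where "A = mat k k (\<lambda>(i,j). real_of_int (imat E b (ws!j) (ws!i)))"
  have A: "A \<in> carrier_mat k k" unfolding A_def by simp
  have Av: "(A *\<^sub>v y) $ i = (\<Sum>j<k. real_of_int (imat E b (ws!j) (ws!i)) * y $ j)"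
    if "i < k" "y \<in> carrier_vec k" for i y
    using that unfolding A_def by (simp add: scalar_prod_def row_def atLeast0LessThan)
  have "det A \<noteq> 0"
  proof
    assume "det A = 0"
    then obtain y where y: "y \<in> carrier_vec k" "y \<noteq> 0\<^sub>v k" "A *\<^sub>v y = 0\<^sub>v k"
      using det_0_iff_vec_prod_zero[OF A] by auto
    obtain i0 where i0: "i0 < k" "y $ i0 \<noteq> 0" using y(1,2) by (metis carrier_vecD eq_vecI index_zero_vec(1,2))
    define x where "x a = (if a \<in> S then y $ (the_inv_into {..<k} ((!) ws) a) else 0)" for a
    have xi: "x (ws ! i) = y $ i" if "i < k" for i
      using that ws unfolding x_def k_def by (auto simp: the_inv_into_f_f inj_on_nth)
    have "ws ! i0 \<in> V" using i0 ws SV k_def by auto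
    moreover have "x (ws ! i0) \<noteq> 0" using xi i0 by simp
    ultimately have neg: "(\<Sum>v\<in>V. \<Sum>w\<in>V. x v * x w * real_of_int (imat E b v w)) < 0"
      using nd unfolding neg_definite_def by blast
    have "(\<Sum>v\<in>V. \<Sum>w\<in>V. x v * x w * real_of_int (imat E b v w))
        = (\<Sum>v\<in>S. \<Sum>w\<in>S. x v * x w * real_of_int (imat E b v w))"
    proof -
      have "(\<Sum>v\<in>V. \<Sum>w\<in>V. x v * x w * real_of_int (imat E b v w))
          = (\<Sum>v\<in>S. \<Sum>w\<in>V. x v * x w * real_of_int (imat E b v w))"
        by (rule sum.mono_neutral_right) (use finV SV x_def in auto)
      also have "\<dots> = (\<Sum>v\<in>S. \<Sum>w\<in>S. x v * x w * real_of_int (imat E b v w))"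
        by (rule sum.cong[OF refl], rule sum.mono_neutral_right) (use finV SV x_def in auto)
      finally show ?thesis .
    qed
    also have "\<dots> = (\<Sum>i<k. \<Sum>j<k. y $ i * y $ j * real_of_int (imat E b (ws!i) (ws!j)))"
      unfolding ws(1)[symmetric] sum_reindex_list[OF ws(2)] k_def[symmetric]
      by (simp add: xi)
    also have "\<dots> = (\<Sum>i<k. y $ i * (A *\<^sub>v y) $ i)"
      by (rule sum.cong[OF refl]) (simp add: Av y(1) sum_distrib_left imat_sym mult_ac)
    also have "\<dots> = 0" using y(3) by simp
    finally show False using neg by simp
  qed
  then have "A \<in> Units (ring_mat TYPE(real) k undefined)" by (rule det_non_zero_imp_unit[OF A])
  then obtain B where B: "A * B = 1\<^sub>m k" "B \<in> carrier_mat k k"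
    using mat_inverse[OF A] by (cases "mat_inverse A") force+
  define gv where "gv = vec k (\<lambda>i. g (ws ! i))"
  define y where "y = B *\<^sub>v gv"
  have yc: "y \<in> carrier_vec k" unfolding y_def gv_def using B by simp
  have Ay: "A *\<^sub>v y = gv"
    unfolding y_def using B A by (simp add: gv_def flip: assoc_mult_mat_vec[OF A B(2)])
  define P where "P a = (if a \<in> S then y $ (the_inv_into {..<k} ((!) ws) a) else 0)" for a
  have Pi: "P (ws ! i) = y $ i" if "i < k" for i
    using that ws unfolding P_def k_def by (auto simp: the_inv_into_f_f inj_on_nth)
  show ?thesis
  proof (intro exI ballI)
    fix v assume "v \<in> S"
    then obtain i where i: "i < k" "v = ws ! i" using ws k_def by (metis in_set_conv_nth)
    have "(\<Sum>w\<in>S. P w * real_of_int (imat E b w v)) = (\<Sum>j<k. y $ j * real_of_int (imat E b (ws!j) (ws!i)))"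
      unfolding ws(1)[symmetric] sum_reindex_list[OF ws(2)] k_def[symmetric] using i by (simp add: Pi)
    also have "\<dots> = (A *\<^sub>v y) $ i" using Av[OF i(1) yc] by (simp add: mult_ac)
    also have "\<dots> = g v" using Ay i unfolding gv_def by simp
    finally show "(\<Sum>w\<in>S. P w * real_of_int (imat E b w v)) = g v" .
  qed
qed

lemma nef:
  fixes D :: "'a \<Rightarrow> real"
  assumes SV: "S \<subseteq> V" and supp: "\<And>a. a \<notin> S \<Longrightarrow> D a = 0"
    and ge: "\<And>v. v \<in> S \<Longrightarrow> (\<Sum>w\<in>V. D w * real_of_int (imat E b w v)) \<ge> 0"
    and vS: "v \<in> S"
  shows "D v \<le> 0"
proof (rule ccontr)
  assume "\<not> D v \<le> 0"
  define x where "x a = max (D a) 0" for a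
  have "v \<in> V" "x v \<noteq> 0" using vS SV \<open>\<not> D v \<le> 0\<close> unfolding x_def by auto
  then have neg: "(\<Sum>v\<in>V. \<Sum>w\<in>V. x v * x w * real_of_int (imat E b v w)) < 0"
    using nd unfolding neg_definite_def by blast
  have "(\<Sum>v\<in>V. \<Sum>w\<in>V. x v * x w * real_of_int (imat E b v w)) \<ge> 0"
  proof (rule sum_nonneg)
    fix u assume uV: "u \<in> V"
    have eq: "(\<Sum>w\<in>V. x u * x w * real_of_int (imat E b u w)) = x u * (\<Sum>w\<in>V. x w * real_of_int (imat E b w u))"
      by (simp add: sum_distrib_left imat_sym mult_ac)
    show "(\<Sum>w\<in>V. x u * x w * real_of_int (imat E b u w)) \<ge> 0"
    proof (cases "D u \<le> 0")
      case True then show ?thesis unfolding eq by (simp add: x_def)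
    next
      case False
      then have uS: "u \<in> S" using supp by force
      have "(\<Sum>w\<in>V. D w * real_of_int (imat E b w u)) \<le> (\<Sum>w\<in>V. x w * real_of_int (imat E b w u))"
      proof (rule sum_mono)
        fix w assume "w \<in> V"
        show "D w * real_of_int (imat E b w u) \<le> x w * real_of_int (imat E b w u)"
        proof (cases "w = u")
          case True then show ?thesis using False by (simp add: x_def)
        next
          case False
          then have "real_of_int (imat E b w u) \<ge> 0" using imat_nonneg by simp
          then show ?thesis by (intro mult_right_mono) (auto simp: x_def)
        qed
      qed
      then have "(\<Sum>w\<in>V. x w * real_of_int (imat E b w u)) \<ge> 0" using ge[OF uS] by linarith
      moreover have "x u \<ge> 0" by (simp add: x_def)
      ultimately show ?thesis unfolding eq by simp
    qed
  qed
  then show False using neg by simp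
qed

lemma min_closed:
  assumes "Y1 \<in> laufer_set V E b Z" "Y2 \<in> laufer_set V E b Z"
  shows "(\<lambda>a. min (Y1 a) (Y2 a)) \<in> laufer_set V E b Z"
proof -
  have key: "iform_E V E b (\<lambda>a. min (Y1 a) (Y2 a)) v \<le> iform_E V E b Y v"
    if "Y v = min (Y1 v) (Y2 v)" "\<And>a. min (Y1 a) (Y2 a) \<le> Y a" for Y v
    unfolding iform_E_def
  proof (rule sum_mono)
    fix w assume "w \<in> V"
    show "min (Y1 w) (Y2 w) * imat E b w v \<le> Y w * imat E b w v"
    proof (cases "w = v")
      case True then show ?thesis using that by simp
    next
      case False then show ?thesis using that imat_nonneg[OF False] by (intro mult_right_mono) auto
    qed
  qed
  show ?thesis using assms unfolding laufer_set_def lattice_def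
  proof (clarsimp)
    fix v assume a: "\<forall>v. v \<notin> V \<longrightarrow> Y1 v = 0" "\<forall>n\<in>nodes V E. Y1 n = Z n"
      "\<forall>v\<in>V - nodes V E. iform_E V E b Y1 v \<le> 0"
      "\<forall>v. v \<notin> V \<longrightarrow> Y2 v = 0" "\<forall>n\<in>nodes V E. Y2 n = Z n"
      "\<forall>v\<in>V - nodes V E. iform_E V E b Y2 v \<le> 0" and v: "v \<in> V" "v \<notin> nodes V E"
    show "iform_E V E b (\<lambda>a. min (Y1 a) (Y2 a)) v \<le> 0"
    proof (cases "Y1 v \<le> Y2 v")
      case True
      then have "iform_E V E b (\<lambda>a. min (Y1 a) (Y2 a)) v \<le> iform_E V E b Y1 v" by (intro key) auto
      moreover have "iform_E V E b Y1 v \<le> 0" using a(3) v by blast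
      ultimately show ?thesis by linarith
    next
      case False
      then have "iform_E V E b (\<lambda>a. min (Y1 a) (Y2 a)) v \<le> iform_E V E b Y2 v" by (intro key) auto
      moreover have "iform_E V E b Y2 v \<le> 0" using a(6) v by blast
      ultimately show ?thesis by linarith
    qed
  qed
qed

lemma ceil_mult_bound: "real_of_int \<lceil>x\<rceil> * real_of_int m \<le> x * real_of_int m + \<bar>real_of_int m\<bar>"
proof (cases "m \<ge> 0")
  case True
  have "real_of_int \<lceil>x\<rceil> \<le> x + 1" by linarith
  then have "real_of_int \<lceil>x\<rceil> * real_of_int m \<le> (x + 1) * real_of_int m"
    using True by (intro mult_right_mono) auto
  then show ?thesis using True by (simp add: algebra_simps)
next
  case False
  have "x \<le> real_of_int \<lceil>x\<rceil>" by linarith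
  then have "real_of_int \<lceil>x\<rceil> * real_of_int m \<le> x * real_of_int m"
    using False by (intro mult_right_mono_neg) auto
  then show ?thesis by simp
qed

lemma split_iform:
  assumes "\<And>a. a \<in> nodes V E \<Longrightarrow> Y a = Z a"
  shows "iform_E V E b Y v = (\<Sum>w\<in>nodes V E. Z w * imat E b w v) + (\<Sum>w\<in>V - nodes V E. Y w * imat E b w v)"
proof -
  have NV: "nodes V E \<subseteq> V" unfolding nodes_def by auto
  have "iform_E V E b Y v = (\<Sum>w\<in>V - nodes V E. Y w * imat E b w v) + (\<Sum>w\<in>nodes V E. Y w * imat E b w v)"
    unfolding iform_E_def by (rule sum.subset_diff[OF NV finV])
  also have "(\<Sum>w\<in>nodes V E. Y w * imat E b w v) = (\<Sum>w\<in>nodes V E. Z w * imat E b w v)"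
    using assms by simp
  finally show ?thesis by simp
qed

lemma least_exists:
  "\<exists>Z0. Z0 \<in> laufer_set V E b Z \<and> (\<forall>Y\<in>laufer_set V E b Z. \<forall>v. Z0 v \<le> Y v)"
proof -
  define N where "N = nodes V E"
  define W where "W = V - N"
  have NV: "N \<subseteq> V" unfolding N_def nodes_def by auto
  have WV: "W \<subseteq> V" unfolding W_def by auto
  have finW: "finite W" using finV WV finite_subset by auto
  obtain P :: "'a \<Rightarrow> real" where P: "\<And>v. v \<in> W \<Longrightarrow> (\<Sum>w\<in>W. P w * real_of_int (imat E b w v)) = -1"
    using solve[OF WV, of "\<lambda>_. -1"] by auto
  define d where "d v = (\<Sum>w\<in>N. Z w * imat E b w v)" for v
  define t :: int where "t = (\<Sum>v\<in>W. \<bar>d v\<bar>) + (\<Sum>v\<in>W. \<Sum>w\<in>W. \<bar>imat E b w v\<bar>) + 1"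
  have td: "\<bar>d v\<bar> + (\<Sum>w\<in>W. \<bar>imat E b w v\<bar>) \<le> t" if "v \<in> W" for v
  proof -
    have "\<bar>d v\<bar> \<le> (\<Sum>v\<in>W. \<bar>d v\<bar>)" by (rule member_le_sum) (use that finW in auto)
    moreover have "(\<Sum>w\<in>W. \<bar>imat E b w v\<bar>) \<le> (\<Sum>v\<in>W. \<Sum>w\<in>W. \<bar>imat E b w v\<bar>)"
      by (rule member_le_sum[of v W "\<lambda>v. \<Sum>w\<in>W. \<bar>imat E b w v\<bar>"]) (use that finW in \<open>auto intro: sum_nonneg\<close>)
    ultimately show ?thesis unfolding t_def by linarith
  qed
  have split: "iform_E V E b Y v = d v + (\<Sum>w\<in>W. Y w * imat E b w v)"
    if "\<And>a. a \<in> N \<Longrightarrow> Y a = Z a" for Y v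
    using split_iform[of Y] that unfolding d_def W_def N_def by simp
  define Y0 where "Y0 a = (if a \<in> N then Z a else if a \<in> W then \<lceil>real_of_int t * P a\<rceil> else 0)" for a
  have Y0: "Y0 \<in> laufer_set V E b Z"
    unfolding laufer_set_def lattice_def
  proof (intro CollectI conjI allI impI ballI)
    show "v \<notin> V \<Longrightarrow> Y0 v = 0" for v using NV WV unfolding Y0_def by auto
    show "n \<in> nodes V E \<Longrightarrow> Y0 n = Z n" for n unfolding Y0_def N_def by simp
    fix v assume "v \<in> V - nodes V E"
    then have vW: "v \<in> W" unfolding W_def N_def .
    have "real_of_int (\<Sum>w\<in>W. Y0 w * imat E b w v)
        = (\<Sum>w\<in>W. real_of_int \<lceil>real_of_int t * P w\<rceil> * real_of_int (imat E b w v))"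
      by (simp add: Y0_def W_def)
    also have "\<dots> \<le> (\<Sum>w\<in>W. real_of_int t * P w * real_of_int (imat E b w v) + \<bar>real_of_int (imat E b w v)\<bar>)"
      by (rule sum_mono) (rule ceil_mult_bound)
    also have "\<dots> = real_of_int t * (\<Sum>w\<in>W. P w * real_of_int (imat E b w v)) + real_of_int (\<Sum>w\<in>W. \<bar>imat E b w v\<bar>)"
      by (simp add: sum.distrib sum_distrib_left mult_ac)
    also have "\<dots> = - real_of_int t + real_of_int (\<Sum>w\<in>W. \<bar>imat E b w v\<bar>)" using P[OF vW] by simp
    finally have "(\<Sum>w\<in>W. Y0 w * imat E b w v) \<le> - t + (\<Sum>w\<in>W. \<bar>imat E b w v\<bar>)" by linarith
    moreover have "iform_E V E b Y0 v = d v + (\<Sum>w\<in>W. Y0 w * imat E b w v)"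
      by (rule split) (simp add: Y0_def)
    ultimately show "iform_E V E b Y0 v \<le> 0" using td[OF vW] by linarith
  qed
  define L where "L a = (if a \<in> N then Z a else if a \<in> W then \<lfloor>- real_of_int t * P a\<rfloor> else 0)" for a
  have low: "L a \<le> Y a" if Y: "Y \<in> laufer_set V E b Z" for Y a
  proof -
    have YN: "\<And>a. a \<in> N \<Longrightarrow> Y a = Z a" and Y0': "\<And>a. a \<notin> V \<Longrightarrow> Y a = 0"
      and Yv: "\<And>v. v \<in> W \<Longrightarrow> iform_E V E b Y v \<le> 0"
      using Y unfolding laufer_set_def lattice_def N_def W_def by auto
    define D where "D a = (if a \<in> W then - real_of_int t * P a - real_of_int (Y a) else 0)" for a
    have "D a \<le> 0" if aW: "a \<in> W"
    proof (rule nef[OF WV _ _ aW])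
      show "\<And>a. a \<notin> W \<Longrightarrow> D a = 0" unfolding D_def by simp
      fix v assume vW: "v \<in> W"
      have "(\<Sum>w\<in>V. D w * real_of_int (imat E b w v)) = (\<Sum>w\<in>W. D w * real_of_int (imat E b w v))"
        by (rule sum.mono_neutral_right) (use finV WV D_def in auto)
      also have "\<dots> = - real_of_int t * (\<Sum>w\<in>W. P w * real_of_int (imat E b w v))
           - real_of_int (\<Sum>w\<in>W. Y w * imat E b w v)"
        by (simp add: D_def sum_subtractf sum_distrib_left algebra_simps)
      also have "\<dots> = real_of_int t - real_of_int (\<Sum>w\<in>W. Y w * imat E b w v)" using P[OF vW] by simp
      finally have eq: "(\<Sum>w\<in>V. D w * real_of_int (imat E b w v)) = real_of_int t - real_of_int (\<Sum>w\<in>W. Y w * imat E b w v)" .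
      have "d v + (\<Sum>w\<in>W. Y w * imat E b w v) \<le> 0" using Yv[OF vW] split[OF YN] by simp
      moreover have "\<bar>d v\<bar> \<le> t" using td[OF vW] by (smt (verit) sum_nonneg abs_ge_zero)
      ultimately show "0 \<le> (\<Sum>w\<in>V. D w * real_of_int (imat E b w v))" unfolding eq by linarith
    qed
    then show ?thesis using YN Y0' NV WV unfolding L_def D_def W_def
      by (auto simp: floor_le_iff)
  qed
  define m where "m Y = nat ((\<Sum>a\<in>V. Y a) - (\<Sum>a\<in>V. L a))" for Y :: "'a \<Rightarrow> int"
  obtain Z0 where Z0: "Z0 \<in> laufer_set V E b Z" and Z0m: "\<And>Y. Y \<in> laufer_set V E b Z \<Longrightarrow> m Z0 \<le> m Y"
    using ex_has_least_nat[of "\<lambda>Y. Y \<in> laufer_set V E b Z" Y0 m] Y0 by blast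
  have mono: "(\<Sum>a\<in>V. L a) \<le> (\<Sum>a\<in>V. Y a)" if "Y \<in> laufer_set V E b Z" for Y
    by (rule sum_mono) (rule low[OF that])
  show ?thesis
  proof (intro exI conjI ballI allI)
    show "Z0 \<in> laufer_set V E b Z" by (fact Z0)
    fix Y v assume Y: "Y \<in> laufer_set V E b Z"
    define M where "M a = min (Z0 a) (Y a)" for a
    have M: "M \<in> laufer_set V E b Z" unfolding M_def by (rule min_closed[OF Z0 Y])
    have "m Z0 \<le> m M" by (rule Z0m[OF M])
    then have s1: "(\<Sum>a\<in>V. Z0 a) \<le> (\<Sum>a\<in>V. M a)" using mono[OF M] mono[OF Z0] unfolding m_def by linarith
    have s2: "\<And>a. M a \<le> Z0 a" unfolding M_def by simp
    have "(\<Sum>a\<in>V. Z0 a - M a) = 0"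
    proof -
      have "(\<Sum>a\<in>V. Z0 a - M a) \<le> 0" using s1 by (simp add: sum_subtractf)
      moreover have "(\<Sum>a\<in>V. Z0 a - M a) \<ge> 0" using s2 by (intro sum_nonneg) simp
      ultimately show ?thesis by simp
    qed
    then have "\<forall>a\<in>V. Z0 a - M a = 0" using sum_nonneg_eq_0_iff[OF finV] s2 by (simp add: sum_nonneg_eq_0_iff[OF finV])
    then show "Z0 v \<le> Y v"
    proof (cases "v \<in> V")
      case True then show ?thesis using \<open>\<forall>a\<in>V. Z0 a - M a = 0\<close> unfolding M_def by fastforce
    next
      case False then show ?thesis using Z0 Y unfolding laufer_set_def lattice_def by auto
    qed
  qed
qed

lemma laufer_fixed:
  assumes "laufer V E b Z = Z"
  shows "Z \<in> laufer_set V E b Z" "\<And>Y v. Y \<in> laufer_set V E b Z \<Longrightarrow> Z v \<le> Y v"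
proof -
  have ex1: "\<exists>!Z0. Z0 \<in> laufer_set V E b Z \<and> (\<forall>Y\<in>laufer_set V E b Z. \<forall>v. Z0 v \<le> Y v)"
  proof (rule ex_ex1I)
    show "\<exists>Z0. Z0 \<in> laufer_set V E b Z \<and> (\<forall>Y\<in>laufer_set V E b Z. \<forall>v. Z0 v \<le> Y v)" by (rule least_exists)
    fix A B assume "A \<in> laufer_set V E b Z \<and> (\<forall>Y\<in>laufer_set V E b Z. \<forall>v. A v \<le> Y v)"
      "B \<in> laufer_set V E b Z \<and> (\<forall>Y\<in>laufer_set V E b Z. \<forall>v. B v \<le> Y v)"
    then show "A = B" by (intro ext antisym) auto
  qed
  have "laufer V E b Z \<in> laufer_set V E b Z \<and> (\<forall>Y\<in>laufer_set V E b Z. \<forall>v. laufer V E b Z v \<le> Y v)"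
    unfolding laufer_def by (rule theI'[OF ex1])
  then show "Z \<in> laufer_set V E b Z" "\<And>Y v. Y \<in> laufer_set V E b Z \<Longrightarrow> Z v \<le> Y v"
    using assms by auto
qed

end

context plumb begin

lemma iform_nbr:
  assumes "v \<in> V"
  shows "iform_E V E b Y v = - b v * Y v + (\<Sum>w\<in>{w\<in>V. E v w}. Y w)"
proof -
  have "iform_E V E b Y v = (\<Sum>w\<in>V. (if w = v then - b v * Y v else 0) + (if E v w then Y w else 0))"
    unfolding iform_E_def by (rule sum.cong[OF refl]) (auto simp: imat_def Eirr Esym)
  also have "\<dots> = - b v * Y v + (\<Sum>w\<in>{w\<in>V. E v w}. Y w)"
    using assms finV by (simp add: sum.distrib sum.inter_filter)
  finally show ?thesis .
qed

lemma chain_det_single: "chain_det E b [v] = b v"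
  unfolding chain_det_def by (subst det_single) (auto simp: imat_def)

lemma chain_det_nil: "chain_det E b [] = 1"
  unfolding chain_det_def by simp

lemma chain_main:
  fixes n :: 'a and vs :: "'a list" and Z :: "'a \<Rightarrow> int" and X :: "'a set"
  assumes n_node: "n \<in> nodes V E" and s1: "length vs \<ge> 1" and vsV: "set vs \<subseteq> V" and dist: "distinct vs"
    and nonnode: "set vs \<inter> nodes V E = {}" and XN: "X \<subseteq> nodes V E" and nX: "n \<notin> X"
    and nb: "\<And>i. i < length vs \<Longrightarrow> {w\<in>V. E (vs!i) w} =
        (if i = 0 then {n} else {vs!(i-1)}) \<union> (if i+1 < length vs then {vs!(i+1)} else X)"
    and bc: "\<And>i. i < length vs \<Longrightarrow> b (vs!i) \<ge> 2 \<or> (length vs = 1 \<and> b (vs!0) = 1)"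
    and fixed: "laufer V E b Z = Z"
  shows "Z (vs!0) = \<lceil>(real_of_int (chain_det E b (tl vs)) * real_of_int (Z n)
      + real_of_int (\<Sum>w\<in>X. Z w)) / real_of_int (chain_det E b vs)\<rceil>"
proof -
  define s where "s = length vs"
  have NV: "nodes V E \<subseteq> V" unfolding nodes_def by auto
  have finX: "finite X" using finite_subset[OF subset_trans[OF XN NV] finV] .
  have nV: "n \<in> V" using n_node NV by auto
  have vs_mem: "vs ! i \<in> set vs" if "i < s" for i using that s_def by simp
  have vs_nn: "vs ! i \<notin> nodes V E" if "i < s" for i using vs_mem[OF that] nonnode by blast
  have vs_notn: "vs ! i \<noteq> n" if "i < s" for i using vs_nn[OF that] n_node by blast
  have vs_notX: "vs ! i \<notin> X" if "i < s" for i using vs_nn[OF that] XN by blast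
  have vs_inV: "vs ! i \<in> V" if "i < s" for i using that vsV s_def by auto
  have adj: "E (vs!i) (vs!i') \<longleftrightarrow> (i'+1 = i \<or> i' = i+1)" if "i < s" "i' < s" for i i'
  proof -
    have "E (vs!i) (vs!i') \<longleftrightarrow> vs!i' \<in> {w\<in>V. E (vs!i) w}" using vs_inV[OF that(2)] by simp
    also have "\<dots> \<longleftrightarrow> vs!i' \<in> (if i = 0 then {n} else {vs!(i-1)}) \<union> (if i+1 < s then {vs!(i+1)} else X)"
      using nb[of i] that s_def by simp
    also have "\<dots> \<longleftrightarrow> (i'+1 = i \<or> i' = i+1)"
      using that vs_notn[OF that(2)] vs_notX[OF that(2)] by (auto simp: nth_eq_iff_index_eq[OF dist] s_def)
    finally show ?thesis .
  qed
  have det_step: "chain_det E b (drop p vs) = b (vs!p) * chain_det E b (drop (p+1) vs) - chain_det E b (drop (p+2) vs)"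
    if p: "p + 1 < s" for p
  proof -
    define k where "k = s - p"
    define f where "f = (\<lambda>(i,i'). - imat E b (drop p vs ! i) (drop p vs ! i'))"
    have dn: "drop p vs ! i = vs ! (p + i)" if "i < k" for i using that p k_def s_def by simp
    have k2: "k \<ge> 2" using p k_def by simp
    have "chain_det E b (drop p vs) = det (mat k k f)" unfolding chain_det_def f_def k_def s_def by simp
    also have "\<dots> = f(0,0) * det (mat (k-1) (k-1) (\<lambda>(i,j). f(i+1,j+1)))
       - f(0,1)*f(1,0)* det (mat (k-2) (k-2) (\<lambda>(i,j). f(i+2,j+2)))"
    proof (rule det_tridiag[OF k2])
      fix i j assume "i + 1 < j" "j < k"
      then show "f(i,j) = 0" using dn adj[of "p+i" "p+j"] k_def unfolding f_def imat_def by (auto simp: nth_eq_iff_index_eq[OF dist] s_def)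
    next
      fix i j assume "j + 1 < i" "i < k"
      then show "f(i,j) = 0" using dn adj[of "p+i" "p+j"] k_def unfolding f_def imat_def by (auto simp: nth_eq_iff_index_eq[OF dist] s_def)
    qed
    also have "mat (k-1) (k-1) (\<lambda>(i,j). f(i+1,j+1)) = mat (length (drop (p+1) vs)) (length (drop (p+1) vs))
        (\<lambda>(i, j). - imat E b (drop (p+1) vs ! i) (drop (p+1) vs ! j))"
      by (rule eq_matI) (auto simp: f_def k_def s_def add_ac)
    also have "mat (k-2) (k-2) (\<lambda>(i,j). f(i+2,j+2)) = mat (length (drop (p+2) vs)) (length (drop (p+2) vs))
        (\<lambda>(i, j). - imat E b (drop (p+2) vs ! i) (drop (p+2) vs ! j))"
      by (rule eq_matI) (auto simp: f_def k_def s_def add_ac)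
    also have "f(0,0) = b (vs!p)" using dn[of 0] k2 unfolding f_def imat_def by simp
    also have "f(0,1) * f(1,0) = 1" using dn[of 0] dn[of 1] k2 adj[of p "p+1"] adj[of "p+1" p] p
      unfolding f_def imat_def by (auto simp: nth_eq_iff_index_eq[OF dist] s_def)
    finally show ?thesis unfolding chain_det_def by simp
  qed
  define a where "a j = (if j \<le> s+1 then chain_det E b (drop (j-1) vs) else 0)" for j
  define B where "B j = b (vs!(j-1))" for j
  have as1: "a (s+1) = 1" unfolding a_def s_def by (simp add: chain_det_nil)
  have as2: "a (s+2) = 0" unfolding a_def by simp
  have rec: "a j = B j * a (j+1) - a (j+2)" if "1 \<le> j" "j \<le> s" for j
  proof (cases "j = s")
    case True
    have "drop (s-1) vs = vs!(s-1) # drop (Suc (s-1)) vs"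
      by (rule Cons_nth_drop_Suc[symmetric]) (use s1 s_def in simp)
    then have "drop (s-1) vs = [vs!(s-1)]" using s1 s_def by simp
    then show ?thesis using True as1 as2 that unfolding a_def B_def by (simp add: chain_det_single)
  next
    case False
    then have "j - 1 + 1 < s" using that by simp
    from det_step[OF this] show ?thesis using that False unfolding a_def B_def
      by (simp add: Suc_diff_le numeral_2_eq_2)
  qed
  have pos: "a j > 0" if "1 \<le> j" "j \<le> s+1" for j
  proof (cases "s = 1")
    case True
    then have "j = 1 \<or> j = 2" using that by auto
    moreover have "b (vs!0) \<ge> 1"
    proof -
      have "vs \<noteq> []" using s1 by auto
      then have "2 \<le> b (vs ! 0) \<or> b (vs ! 0) = 1" using bc[of 0] by auto
      then show ?thesis by linarith
    qed
    ultimately show ?thesis using rec[of 1] as1 as2 True unfolding B_def by (auto simp: numeral_2_eq_2)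
  next
    case False
    then have B2: "B j \<ge> 2" if "1 \<le> j" "j \<le> s" for j using bc[of "j-1"] that s_def unfolding B_def by auto
    have "a (j+1) \<ge> 0 \<and> a j \<ge> a (j+1) + 1" if "1 \<le> j" "j \<le> s+1" for j
      using that(2,1)
    proof (induction j rule: inc_induct)
      case base then show ?case using as1 as2 by simp
    next
      case (step j)
      then have IH: "a (j+2) \<ge> 0" "a (j+1) \<ge> a (j+2) + 1" by simp_all
      have m2: "B j * a (j+1) \<ge> 2 * a (j+1)" using B2[of j] step IH by (intro mult_right_mono) auto
      have "a j = B j * a (j+1) - a (j+2)" using rec[of j] step by simp
      then show ?case using m2 IH by (intro conjI; linarith)
    qed
    from this[OF that] show ?thesis by linarith
  qed
  interpret chainarith a B s
    by unfold_locales (use s1 s_def rec as1 as2 pos in auto)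
  define c where "c = (\<Sum>w\<in>X. Z w)"
  have nbsum: "(\<Sum>w\<in>{w\<in>V. E (vs!i) w}. Y w) = (if i = 0 then Y n else Y (vs!(i-1)))
      + (if i+1 < s then Y (vs!(i+1)) else (\<Sum>w\<in>X. Y w))" if "i < s" for i Y
  proof -
    define p where "p = (if i = 0 then n else vs!(i-1))"
    define R where "R = (if i+1 < s then {vs!(i+1)} else X)"
    have eq: "{w\<in>V. E (vs!i) w} = insert p R" using nb[of i] that unfolding p_def R_def s_def by auto
    have pR: "p \<notin> R"
    proof (cases "i = 0")
      case True then show ?thesis using nX vs_notn[of 1] unfolding p_def R_def by auto
    next
      case False
      then have "vs!(i-1) \<notin> X" using vs_notX that by simp
      moreover have "vs!(i-1) \<noteq> vs!(i+1)" if "i+1 < s" using that False dist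
        by (simp add: nth_eq_iff_index_eq s_def)
      ultimately show ?thesis using False unfolding p_def R_def by auto
    qed
    have "finite R" unfolding R_def using finX by auto
    then show ?thesis unfolding eq using pR by (simp add: p_def R_def)
  qed
  have ZL: "Z \<in> laufer_set V E b Z" and Zmin: "\<And>Y v. Y \<in> laufer_set V E b Z \<Longrightarrow> Z v \<le> Y v"
    using laufer_fixed[OF fixed] by auto
  have Zle: "iform_E V E b Z v \<le> 0" if "v \<in> V" "v \<notin> nodes V E" for v
    using ZL that unfolding laufer_set_def by auto
  define z where "z j = (if j = 0 then Z n else if j \<le> s then Z (vs!(j-1)) else c)" for j
  have "a 1 * z 1 \<ge> a 2 * z 0 + c"
  proof (rule lower)
    show "z (s+1) = c" unfolding z_def by simp
    fix j assume j: "1 \<le> j" "j \<le> s"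
    have vin: "j - 1 < s" using j by simp
    have vn: "vs!(j-1) \<notin> nodes V E" using vs_nn[OF vin] .
    have "iform_E V E b Z (vs!(j-1)) \<le> 0" using Zle[OF vs_inV[OF vin] vn] .
    then have h: "- b (vs!(j-1)) * Z (vs!(j-1)) + ((if j-1 = 0 then Z n else Z (vs!(j-1-1)))
      + (if j-1+1 < s then Z (vs!(j-1+1)) else (\<Sum>w\<in>X. Z w))) \<le> 0"
      unfolding iform_nbr[OF vs_inV[OF vin]] nbsum[OF vin] .
    show "z (j-1) + z (j+1) \<le> B j * z j"
      using j h unfolding z_def B_def c_def
      by (auto split: if_splits)
  qed
  then have low: "a 1 * Z (vs!0) \<ge> a 2 * Z n + c" unfolding z_def using s1 s_def by simp
  obtain z' where z': "z' 0 = Z n" "z' (s+1) = c" "\<And>j. 1 \<le> j \<Longrightarrow> j \<le> s \<Longrightarrow> z' (j-1) + z' (j+1) \<le> B j * z' j"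
    "z' 1 = \<lceil>(real_of_int (a 2) * real_of_int (Z n) + real_of_int c) / real_of_int (a 1)\<rceil>"
    using upper[of "Z n" c] by auto
  define Y where "Y x = (if x \<in> set vs then z' (the_inv_into {..<s} ((!) vs) x + 1) else Z x)" for x
  have Yi: "Y (vs!i) = z' (i+1)" if "i < s" for i
    using that dist unfolding Y_def s_def by (auto simp: the_inv_into_f_f inj_on_nth)
  have Yo: "Y x = Z x" if "x \<notin> set vs" for x using that unfolding Y_def by simp
  have YL: "Y \<in> laufer_set V E b Z"
    unfolding laufer_set_def lattice_def
  proof (intro CollectI conjI allI impI ballI)
    show "Y x = 0" if "x \<notin> V" for x
    proof -
      have "x \<notin> set vs" using vsV that by auto
      then have "Y x = Z x" by (rule Yo)
      then show ?thesis using ZL that unfolding laufer_set_def lattice_def by auto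
    qed
    show "x \<in> nodes V E \<Longrightarrow> Y x = Z x" for x using nonnode Yo by auto
    fix v assume v: "v \<in> V - nodes V E"
    show "iform_E V E b Y v \<le> 0"
    proof (cases "v \<in> set vs")
      case True
      then obtain i where i: "i < s" "v = vs!i" unfolding s_def in_set_conv_nth by blast
      have Yn: "Y n = Z n" using n_node nonnode Yo by auto
      have YX: "(\<Sum>w\<in>X. Y w) = c" unfolding c_def using XN nonnode Yo by (intro sum.cong) auto
      have ineq: "z' i + z' (i+2) \<le> b (vs!i) * z' (i+1)" using z'(3)[of "i+1"] i unfolding B_def by simp
      have eq: "iform_E V E b Y (vs!i) = - b (vs!i) * Y (vs!i) + ((if i = 0 then Y n else Y (vs!(i-1)))
        + (if i+1 < s then Y (vs!(i+1)) else (\<Sum>w\<in>X. Y w)))"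
        by (simp only: iform_nbr[OF vs_inV[OF i(1)]] nbsum[OF i(1)])
      have p: "(if i = 0 then Y n else Y (vs!(i-1))) = z' i"
        using Yn z'(1) Yi[of "i-1"] i by auto
      have q: "(if i+1 < s then Y (vs!(i+1)) else (\<Sum>w\<in>X. Y w)) = z' (i+2)"
      proof (cases "i+1 < s")
        case True then show ?thesis using Yi[of "i+1"] by simp
      next
        case False
        then have "i + 2 = s + 1" using i by simp
        then show ?thesis using False YX z'(2) by simp
      qed
      show ?thesis unfolding i(2) eq p q Yi[OF i(1)] using ineq by simp
    next
      case False
      have "iform_E V E b Y v = iform_E V E b Z v"
        unfolding iform_nbr[OF DiffD1[OF v]] Yo[OF False]
      proof (intro arg_cong2[where f="(+)"] refl sum.cong)
        fix w assume w: "w \<in> {w\<in>V. E v w}"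
        show "Y w = Z w"
        proof (rule Yo, rule notI)
          assume "w \<in> set vs"
          then obtain i where i: "i < s" "w = vs!i" unfolding s_def in_set_conv_nth by blast
          have "v \<in> {w\<in>V. E (vs!i) w}" using w i Esym v by auto
          then show False using nb[of i] i v False n_node XN s_def by (auto split: if_splits)
        qed
      qed
      then show ?thesis using Zle v by simp
    qed
  qed
  have "0 < s" using s1 s_def by (simp add: Suc_le_eq)
  then have up: "Z (vs!0) \<le> z' 1" using Zmin[OF YL, of "vs!0"] Yi[of 0] by simp
  have "real_of_int (a 2 * Z n + c) \<le> real_of_int (a 1 * Z (vs!0))" using low by (simp only: of_int_le_iff)
  then have "(real_of_int (a 2) * real_of_int (Z n) + real_of_int c) / real_of_int (a 1) \<le> real_of_int (Z (vs!0))"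
    using pos[of 1] s1 by (simp add: pos_divide_le_eq mult.commute)
  then have "z' 1 \<le> Z (vs!0)" unfolding z'(4) by (simp add: ceiling_le)
  with up have fin: "Z (vs!0) = z' 1" by simp
  have a1: "a 1 = chain_det E b vs" unfolding a_def by simp
  have a2: "a 2 = chain_det E b (tl vs)" unfolding a_def using s1 s_def by (simp add: drop_Suc)
  show ?thesis using fin unfolding z'(4) c_def a1 a2 .
qed

end

theorem mainTheorem6:
  fixes V :: "'a set" and E :: "'a \<Rightarrow> 'a \<Rightarrow> bool" and b :: "'a \<Rightarrow> int"
    and n :: 'a and vs :: "'a list" and Z :: "'a \<Rightarrow> int"
  assumes tree: "is_tree V E"
    and negdef: "neg_definite V E b"
    and n_node: "n \<in> nodes V E"
    and s_pos: "length vs \<ge> 1"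
    and vs_V: "set vs \<subseteq> V"
    and vs_dist: "distinct vs"
    and vs_nonnode: "set vs \<inter> nodes V E = {}"
    and adj_n: "E n (vs ! 0)"
    and adj_chain: "\<forall>j. j + 1 < length vs \<longrightarrow> E (vs ! j) (vs ! (j + 1))"
    and b_cond: "\<forall>j < length vs. b (vs ! j) \<ge> 2 \<or>
       (length vs = 1 \<and> degree V E (vs ! 0) = 1 \<and> b (vs ! 0) = 1)"
    and Z_L: "Z \<in> lattice V"
    and fixed: "laufer V E b Z = Z"
  shows "(\<forall>n'. ((\<forall>j < length vs. degree V E (vs ! j) = 2) \<and> E (last vs) n'
              \<and> n' \<in> nodes V E \<and> n' \<noteq> n)
          \<longrightarrow> Z (vs ! 0) = \<lceil>(real_of_int (chain_det E b (tl vs)) * real_of_int (Z n)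
                 + real_of_int (Z n')) / real_of_int (chain_det E b vs)\<rceil>)
       \<and> ((degree V E (last vs) = 1 \<and> (\<forall>j. j + 1 < length vs \<longrightarrow> degree V E (vs ! j) = 2))
          \<longrightarrow> Z (vs ! 0) = \<lceil>(real_of_int (chain_det E b (tl vs)) * real_of_int (Z n))
                 / real_of_int (chain_det E b vs)\<rceil>)"
proof -
  have gok: "graph_ok V E" using tree unfolding is_tree_def by auto
  interpret plumb V E b using gok negdef by unfold_locales
  define s where "s = length vs"
  have NV: "nodes V E \<subseteq> V" unfolding nodes_def by auto
  have nV: "n \<in> V" using n_node NV by auto
  have vs_mem: "vs ! i \<in> set vs" if "i < s" for i using that s_def by simp
  have vs_nn: "vs ! i \<notin> nodes V E" if "i < s" for i using vs_mem[OF that] vs_nonnode by blast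
  have vs_notn: "vs ! i \<noteq> n" if "i < s" for i using vs_nn[OF that] n_node by blast
  have vs_inV: "vs ! i \<in> V" if "i < s" for i using vs_mem[OF that] vs_V by blast
  have bc: "\<And>i. i < length vs \<Longrightarrow> b (vs!i) \<ge> 2 \<or> (length vs = 1 \<and> b (vs!0) = 1)"
    using b_cond by blast
  have last_eq: "last vs = vs ! (s - 1)" using s_pos s_def by (simp add: last_conv_nth Suc_le_eq)
  have nbgen: "{w\<in>V. E (vs!i) w} = (if i = 0 then {n} else {vs!(i-1)}) \<union> (if i+1 < s then {vs!(i+1)} else X)"
    if i: "i < s" and XN: "X \<subseteq> nodes V E" and nX: "n \<notin> X" and XE: "\<And>x. x \<in> X \<Longrightarrow> E (last vs) x"
      and finX: "finite X"
      and deg: "degree V E (vs!i) = 1 + (if i+1 < s then 1 else card X)" for i X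
  proof -
    define p where "p = (if i = 0 then n else vs!(i-1))"
    define R where "R = (if i+1 < s then {vs!(i+1)} else X)"
    have pR: "p \<notin> R"
    proof (cases "i = 0")
      case True
      then show ?thesis using nX vs_notn[of 1] unfolding p_def R_def by auto
    next
      case False
      have "i - 1 < s" using i by simp
      then have "vs!(i-1) \<notin> X" using vs_nn[of "i-1"] XN by blast
      moreover have "vs!(i-1) \<noteq> vs!(i+1)" if "i+1 < s" using that False vs_dist
        by (simp add: nth_eq_iff_index_eq s_def)
      ultimately show ?thesis using False unfolding p_def R_def by auto
    qed
    have finR: "finite R" unfolding R_def using finX by auto
    have pE: "p \<in> V \<and> E (vs!i) p"
    proof (cases "i = 0")
      case True then show ?thesis using adj_n nV Esym unfolding p_def by auto
    next
      case False
      then have "i - 1 + 1 < length vs" using i s_def by simp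
      then have "E (vs!(i-1)) (vs!(i-1+1))" using adj_chain by blast
      then have "E (vs!(i-1)) (vs!i)" using False by simp
      then show ?thesis using False Esym vs_inV[of "i-1"] i unfolding p_def by auto
    qed
    have RE: "R \<subseteq> {w\<in>V. E (vs!i) w}"
    proof (cases "i+1 < s")
      case True then show ?thesis using adj_chain vs_inV[of "i+1"] s_def unfolding R_def by auto
    next
      case False
      then have "i = s - 1" using i by linarith
      then have "vs!i = last vs" using last_eq by simp
      then show ?thesis using False XE XN NV unfolding R_def by auto
    qed
    have sub: "insert p R \<subseteq> {w\<in>V. E (vs!i) w}" using pE RE by auto
    have cR: "card R = (if i+1 < s then 1 else card X)" unfolding R_def by simp
    have "card (insert p R) = degree V E (vs!i)" using pR finR cR deg by simp
    then have "{w\<in>V. E (vs!i) w} = insert p R"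
      using card_subset_eq[OF _ sub] finV unfolding degree_def by auto
    then show ?thesis unfolding p_def R_def by auto
  qed
  show ?thesis
  proof (intro conjI allI impI)
    fix n' assume H: "(\<forall>j < length vs. degree V E (vs ! j) = 2) \<and> E (last vs) n'
              \<and> n' \<in> nodes V E \<and> n' \<noteq> n"
    have nb: "{w\<in>V. E (vs!i) w} = (if i = 0 then {n} else {vs!(i-1)}) \<union> (if i+1 < length vs then {vs!(i+1)} else {n'})"
      if "i < length vs" for i
      using nbgen[of i "{n'}"] that H s_def by auto
    from chain_main[OF n_node s_pos vs_V vs_dist vs_nonnode _ _ nb bc fixed]
    show "Z (vs ! 0) = \<lceil>(real_of_int (chain_det E b (tl vs)) * real_of_int (Z n)
                 + real_of_int (Z n')) / real_of_int (chain_det E b vs)\<rceil>"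
      using H by auto
  next
    assume H: "degree V E (last vs) = 1 \<and> (\<forall>j. j + 1 < length vs \<longrightarrow> degree V E (vs ! j) = 2)"
    have nb: "{w\<in>V. E (vs!i) w} = (if i = 0 then {n} else {vs!(i-1)}) \<union> (if i+1 < length vs then {vs!(i+1)} else {})"
      if "i < length vs" for i
    proof (rule nbgen[of i "{}", unfolded s_def])
      show "degree V E (vs!i) = 1 + (if i+1 < length vs then 1 else card {})"
      proof (cases "i+1 < length vs")
        case True then show ?thesis using H by simp
      next
        case False
        then have "i = s - 1" using that s_def by linarith
        then have "vs!i = last vs" using last_eq by simp
        then show ?thesis using H False by simp
      qed
    qed (use that in auto)
    from chain_main[OF n_node s_pos vs_V vs_dist vs_nonnode _ _ nb bc fixed]
    show "Z (vs ! 0) = \<lceil>(real_of_int (chain_det E b (tl vs)) * real_of_int (Z n))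
                 / real_of_int (chain_det E b vs)\<rceil>"
      by simp
  qed
qed

end
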